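(* Let $p$, $F$, $a$, $K$, $J_1$ be as in the context. The sequence $$0\longrightarrow\langle[a]\rangle\xrightarrow{\ i\ }F^\times/F^{\times p}\xrightarrow{\ \epsilon\ }J_1\xrightarrow{\ N\ }\langle[a]\rangle$$ is well defined and exact, where $\langle[a]\rangle\subseteq F^\times/F^{\times p}$ is the subgroup generated by the class of $a$, $i$ is inclusion, $\epsilon$ is induced by the inclusion $F^\times\subseteq K^\times$, and $N$ is induced by the norm $N_{K/F}\colon K^\times\to F^\times$ (in particular $[N_{K/F}(\theta)]\in\langle[a]\rangle$ for every $[\theta]\in J_1$). Moreover, $N\colon J_1\to\langle[a]\rangle$ is surjective if and only if $\xi_p\in N_{K/F}(K^\times)$.
   Context: Let $p$ be a prime and $F$ a field of characteristic different from $p$ containing a primitive $p$th root of unity $\xi_p$. Let $a\in F^\times\setminus F^{\times p}$ and $K=F(\sqrt[p]{a})$, a cyclic extension of degree $p$; $K^\times=K\setminus\{0\}$. Let $G=\mathrm{Gal}(K/F)$, $J=K^\times/K^{\times p}$, and $J_1=J^G$ the submodule of $G$-fixed elements of $J$. *)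

theory Defs
  imports Main "HOL-Computational_Algebra.Primes"
begin

definition is_subfield :: "'k::field set \<Rightarrow> bool" where
  "is_subfield S \<longleftrightarrow> 0 \<in> S \<and> 1 \<in> S \<and>
     (\<forall>x\<in>S. \<forall>y\<in>S. x + y \<in> S \<and> x * y \<in> S) \<and>
     (\<forall>x\<in>S. - x \<in> S) \<and> (\<forall>x\<in>S. x \<noteq> 0 \<longrightarrow> inverse x \<in> S)"

text \<open>The whole field (type) is generated over F by alpha: K = F(alpha).\<close>
definition generated_by :: "'k::field set \<Rightarrow> 'k \<Rightarrow> bool" where
  "generated_by F \<alpha> \<longleftrightarrow>
     (\<forall>S. is_subfield S \<and> F \<subseteq> S \<and> \<alpha> \<in> S \<longrightarrow> S = UNIV)"

definition primitive_root :: "nat \<Rightarrow> 'k::field \<Rightarrow> bool" where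
  "primitive_root n \<xi> \<longleftrightarrow> \<xi> ^ n = 1 \<and> (\<forall>k. 0 < k \<and> k < n \<longrightarrow> \<xi> ^ k \<noteq> 1)"

definition is_field_aut :: "('k::field \<Rightarrow> 'k) \<Rightarrow> bool" where
  "is_field_aut \<sigma> \<longleftrightarrow> bij \<sigma> \<and> \<sigma> 1 = 1 \<and>
     (\<forall>x y. \<sigma> (x + y) = \<sigma> x + \<sigma> y) \<and> (\<forall>x y. \<sigma> (x * y) = \<sigma> x * \<sigma> y)"

definition Gal :: "'k::field set \<Rightarrow> ('k \<Rightarrow> 'k) set" where
  "Gal F = {\<sigma>. is_field_aut \<sigma> \<and> (\<forall>x\<in>F. \<sigma> x = x)}"

definition normKF :: "'k::field set \<Rightarrow> 'k \<Rightarrow> 'k" where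
  "normKF F \<theta> = (\<Prod>\<sigma>\<in>Gal F. \<sigma> \<theta>)"

definition classK :: "nat \<Rightarrow> 'k::field \<Rightarrow> 'k set" where
  "classK p \<theta> = {\<theta> * y ^ p | y. y \<noteq> 0}"

definition classF :: "'k::field set \<Rightarrow> nat \<Rightarrow> 'k \<Rightarrow> 'k set" where
  "classF F p x = {x * y ^ p | y. y \<in> F \<and> y \<noteq> 0}"

definition FmodP :: "'k::field set \<Rightarrow> nat \<Rightarrow> 'k set set" where
  "FmodP F p = {classF F p x | x. x \<in> F \<and> x \<noteq> 0}"

definition JK :: "nat \<Rightarrow> 'k::field set set" where
  "JK p = {classK p \<theta> | \<theta>. \<theta> \<noteq> 0}"

definition J1 :: "'k::field set \<Rightarrow> nat \<Rightarrow> 'k set set" where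
  "J1 F p = {c \<in> JK p. \<forall>\<sigma>\<in>Gal F. \<sigma> ` c = c}"

text \<open>The subgroup of F^x/F^{x p} generated by [a] (cyclic, so the powers of [a]).\<close>
definition gen_a :: "'k::field set \<Rightarrow> nat \<Rightarrow> 'k \<Rightarrow> 'k set set" where
  "gen_a F p a = {classF F p (a ^ k) | k. True}"

end

theory Submission
  imports Defs "HOL-Computational_Algebra.Polynomial"
begin

lemma prod_linear_eq:
  fixes P :: "'k::field poly"
  assumes "finite R" "lead_coeff P = 1" "card R = degree P" "\<forall>x\<in>R. poly P x = 0"
  shows "P = (\<Prod>x\<in>R. [:-x,1:])"
  using assms
proof (induction R arbitrary: P rule: finite_induct)
  case empty
  then have "degree P = 0" by simp
  then obtain c where "P = [:c:]" by (auto elim!: degree_eq_zeroE)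
  then show ?case using empty.prems(1) by (simp add: one_pCons)
next
  case (insert r R)
  have "[:-r,1:] dvd P" using insert.prems(3) poly_eq_0_iff_dvd by auto
  then obtain P1 where P1: "P = [:-r,1:] * P1" by (auto elim: dvdE)
  have P10: "P1 \<noteq> 0" using P1 insert.prems(1) by auto
  have "lead_coeff P1 = 1" using P1 insert.prems(1) by (simp only: lead_coeff_mult) simp
  moreover have "degree P = Suc (degree P1)" using P1 P10 by (simp del: mult_pCons_left add: degree_mult_eq)
  hence "card R = degree P1" using insert.hyps insert.prems(2) by simp
  moreover have "\<forall>x\<in>R. poly P1 x = 0"
  proof
    fix x assume "x \<in> R"
    hence "x \<noteq> r" "poly P x = 0" using insert.hyps insert.prems(3) by auto
    thus "poly P1 x = 0" using P1 by simp
  qed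
  ultimately have "P1 = (\<Prod>x\<in>R. [:-x,1:])" using insert.IH by blast
  thus ?case using P1 by (simp only: prod.insert[OF insert.hyps])
qed

lemma split_lemma:
  fixes g :: "'k::field poly"
  assumes "finite R" "g dvd (\<Prod>x\<in>R. [:-x,1:])" "lead_coeff g = 1"
  shows "\<exists>I\<subseteq>R. g = (\<Prod>x\<in>I. [:-x,1:])"
  using assms
proof (induction R arbitrary: g rule: finite_induct)
  case empty
  then have "g dvd 1" by simp
  then obtain c where "g = [:c:]" using is_unit_poly_iff[of g] by auto
  then show ?case using empty.prems(2) by auto
next
  case (insert r R)
  have dv: "g dvd [:-r,1:] * (\<Prod>x\<in>R. [:-x,1:])" using insert.prems(1) insert.hyps by (simp del: mult_pCons_left)
  show ?case
  proof (cases "poly g r = 0")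
    case True
    hence "[:-r,1:] dvd g" using poly_eq_0_iff_dvd by blast
    then obtain h where h: "g = [:-r,1:] * h" by (rule dvdE)
    have "h dvd (\<Prod>x\<in>R. [:-x,1:])"
    proof -
      have "[:-r,1:]*h dvd [:-r,1:]*(\<Prod>x\<in>R. [:-x,1:])" using dv h by (simp only:)
      moreover have "[:-r,1:] \<noteq> (0::'k poly)" by simp
      ultimately show ?thesis by (simp only: dvd_mult_cancel_left) simp
    qed
    moreover have "lead_coeff h = 1" using h insert.prems(2)
      by (simp only: lead_coeff_mult) simp
    ultimately have "\<exists>I\<subseteq>R. h = (\<Prod>x\<in>I. [:-x,1:])" by (rule insert.IH)
    then obtain I where "I \<subseteq> R" "h = (\<Prod>x\<in>I. [:-x,1:])" by blast
    moreover have "r \<notin> I" using insert.hyps(2) \<open>I \<subseteq> R\<close> by blast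
    moreover have "finite I" using \<open>I \<subseteq> R\<close> insert.hyps(1) finite_subset by blast
    ultimately have B: "g = (\<Prod>x\<in>insert r I. [:-x,1:])" using h by (simp only: prod.insert[OF \<open>finite I\<close> \<open>r \<notin> I\<close>])
    have A: "insert r I \<subseteq> insert r R" using \<open>I \<subseteq> R\<close> by blast
    show ?thesis using A B by (intro exI[of _ "insert r I"] conjI)
  next
    case False
    hence gr: "poly g r \<noteq> 0" using poly_eq_0_iff_dvd by blast
    obtain k where k: "[:-r,1:] * (\<Prod>x\<in>R. [:-x,1:]) = g * k" using dv by (rule dvdE) blast
    have "poly (g * k) r = 0" using k[symmetric] by (simp del: mult_pCons_left)
    hence "poly k r = 0" using gr by simp
    hence "[:-r,1:] dvd k" using poly_eq_0_iff_dvd by blast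
    then obtain k' where k': "k = [:-r,1:] * k'" by (rule dvdE)
    have "[:-r,1:] * (\<Prod>x\<in>R. [:-x,1:]) = [:-r,1:] * (g * k')" using k k' by (simp only: ac_simps)
    hence "(\<Prod>x\<in>R. [:-x,1:]) = g * k'" by (simp only: mult_cancel_left) simp
    hence "g dvd (\<Prod>x\<in>R. [:-x,1:])" by (rule dvdI)
    then have "\<exists>I\<subseteq>R. g = (\<Prod>x\<in>I. [:-x,1:])" using insert.prems(2) by (rule insert.IH)
    then obtain I where "I \<subseteq> R" "g = (\<Prod>x\<in>I. [:-x,1:])" by blast
    show ?thesis apply (rule exI[of _ I]) using \<open>I \<subseteq> R\<close> \<open>g = _\<close> by blast
  qed
qed

locale kummer =
  fixes F :: "'k::field set" and p :: nat and xi a al :: 'k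
  assumes p_prime: "prime p"
    and subF: "is_subfield F"
    and p_char: "of_nat p \<noteq> (0::'k)"
    and xiF: "xi \<in> F" and xi_prim: "primitive_root p xi"
    and aF: "a \<in> F" and a_nz: "a \<noteq> 0" and a_np: "\<not> (\<exists>y\<in>F. a = y ^ p)"
    and al_p: "al ^ p = a" and al_gen: "generated_by F al"
begin

lemma F0: "0 \<in> F" and F1: "1 \<in> F"
  using subF by (auto simp: is_subfield_def)
lemma F_add: "x \<in> F \<Longrightarrow> y \<in> F \<Longrightarrow> x + y \<in> F"
  and F_mult: "x \<in> F \<Longrightarrow> y \<in> F \<Longrightarrow> x * y \<in> F"
  and F_uminus: "x \<in> F \<Longrightarrow> - x \<in> F"
  using subF by (auto simp: is_subfield_def)
lemma F_inverse: "x \<in> F \<Longrightarrow> inverse x \<in> F"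
  using subF F0 by (cases "x = 0") (auto simp: is_subfield_def)
lemma F_diff: "x \<in> F \<Longrightarrow> y \<in> F \<Longrightarrow> x - y \<in> F"
  using F_add[of x "-y"] F_uminus by simp
lemma F_divide: "x \<in> F \<Longrightarrow> y \<in> F \<Longrightarrow> x / y \<in> F"
  using F_mult F_inverse by (simp add: divide_inverse)
lemma F_power: "x \<in> F \<Longrightarrow> x ^ n \<in> F"
  by (induction n) (auto intro: F1 F_mult)
lemma F_sum: "(\<And>i. i \<in> A \<Longrightarrow> f i \<in> F) \<Longrightarrow> sum f A \<in> F"
  by (induction A rule: infinite_finite_induct) (auto intro: F0 F_add)
lemma F_prod: "(\<And>i. i \<in> A \<Longrightarrow> f i \<in> F) \<Longrightarrow> prod f A \<in> F"
  by (induction A rule: infinite_finite_induct) (auto intro: F1 F_mult)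

lemma p_ge2: "p \<ge> 2" using p_prime prime_ge_2_nat by blast
lemma p_pos: "p > 0" using p_ge2 by simp
lemma xi_p: "xi ^ p = 1" using xi_prim by (simp add: primitive_root_def)
lemma xi_pow_ne1: "0 < k \<Longrightarrow> k < p \<Longrightarrow> xi ^ k \<noteq> 1" using xi_prim by (simp add: primitive_root_def)
lemma xi_nz: "xi \<noteq> 0" using xi_p p_pos by (cases "xi = 0") (auto simp: zero_power)
lemma al_nz: "al \<noteq> 0" using al_p a_nz p_pos by (cases "al = 0") (auto simp: zero_power)

lemma xi_pow_inj: assumes "i < p" "j < p" "xi ^ i = xi ^ j" shows "i = j"
proof (rule ccontr)
  assume "i \<noteq> j"
  then consider "i < j" | "j < i" by linarith
  then show False
  proof cases
    case 1
    have e: "xi ^ j = xi ^ i * xi ^ (j - i)" using 1 by (simp add: power_add[symmetric])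
    have "xi ^ i * 1 = xi ^ i * xi ^ (j - i)" unfolding mult_1_right by (rule trans[OF assms(3) e])
    hence "xi ^ (j - i) = 1" using xi_nz by (subst (asm) mult_left_cancel) simp_all
    thus False using xi_pow_ne1[of "j - i"] 1 assms(1,2) by simp
  next
    case 2
    have e: "xi ^ i = xi ^ j * xi ^ (i - j)" using 2 by (simp add: power_add[symmetric])
    have "xi ^ j * 1 = xi ^ j * xi ^ (i - j)" unfolding mult_1_right by (rule trans[OF assms(3)[symmetric] e])
    hence "xi ^ (i - j) = 1" using xi_nz by (subst (asm) mult_left_cancel) simp_all
    thus False using xi_pow_ne1[of "i - j"] 2 assms(1,2) by simp
  qed
qed

definition mu :: "'k set" where "mu = {c. c ^ p = 1}"

lemma mu_eq: "mu = (\<lambda>j. xi ^ j) ` {..<p}"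
proof -
  have sub: "(\<lambda>j. xi ^ j) ` {..<p} \<subseteq> mu"
  proof
    fix x assume "x \<in> (\<lambda>j. xi ^ j) ` {..<p}"
    then obtain j where x: "x = xi ^ j" by blast
    have "(xi ^ j) ^ p = (xi ^ p) ^ j" by (simp add: power_mult[symmetric] mult.commute)
    thus "x \<in> mu" using x xi_p by (simp add: mu_def)
  qed
  have "mu = {x. poly (monom 1 p - 1) x = 0}" unfolding mu_def by (simp add: poly_monom)
  moreover have nz: "monom 1 p - 1 \<noteq> (0::'k poly)"
  proof
    assume "monom 1 p - 1 = (0::'k poly)"
    hence "coeff (monom 1 p - 1) p = (coeff 0 p::'k)" by simp
    thus False using p_pos by simp
  qed
  ultimately have fin: "finite mu" and cardle: "card mu \<le> degree (monom 1 p - 1 :: 'k poly)"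
    using poly_roots_finite[OF nz] card_poly_roots_bound[OF nz] by simp_all
  have "degree (monom 1 p - 1 :: 'k poly) \<le> p"
    using degree_diff_le_max[of "monom 1 p" "1::'k poly"] degree_monom_le[of "1::'k" p] by simp
  hence "card mu \<le> p" using cardle by simp
  moreover have "card ((\<lambda>j. xi ^ j) ` {..<p}) = p"
    by (subst card_image) (auto intro!: inj_onI xi_pow_inj)
  ultimately have "(\<lambda>j. xi ^ j) ` {..<p} = mu" using card_seteq[OF fin sub] by simp
  thus ?thesis by simp
qed

lemma mu_F: "c \<in> mu \<Longrightarrow> c \<in> F" using mu_eq xiF F_power by auto
lemma finite_mu: "finite mu" using mu_eq by simp
lemma card_mu: "card mu = p" using mu_eq by (simp add: card_image inj_on_def xi_pow_inj)
lemma mu_iff: "c \<in> mu \<longleftrightarrow> c ^ p = 1" by (simp add: mu_def)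
lemma mu_nz: "c \<in> mu \<Longrightarrow> c \<noteq> 0" using p_pos by (auto simp: mu_def zero_power)


definition Fp :: "'k poly \<Rightarrow> bool" where "Fp q \<longleftrightarrow> (\<forall>i. coeff q i \<in> F)"

lemma Fp_0: "Fp 0" by (simp add: Fp_def F0)
lemma Fp_pCons: "c \<in> F \<Longrightarrow> Fp q \<Longrightarrow> Fp (pCons c q)"
  by (auto simp: Fp_def coeff_pCons split: nat.split)
lemma Fp_const: "c \<in> F \<Longrightarrow> Fp [:c:]" using Fp_pCons Fp_0 by blast
lemma Fp_1: "Fp 1" using Fp_const F1 by (simp add: one_pCons)
lemma Fp_add: "Fp q \<Longrightarrow> Fp r \<Longrightarrow> Fp (q + r)" by (simp add: Fp_def F_add)
lemma Fp_uminus: "Fp q \<Longrightarrow> Fp (- q)" by (simp add: Fp_def F_uminus)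
lemma Fp_diff: "Fp q \<Longrightarrow> Fp r \<Longrightarrow> Fp (q - r)" by (simp add: Fp_def F_diff)
lemma Fp_smult: "c \<in> F \<Longrightarrow> Fp q \<Longrightarrow> Fp (smult c q)" by (simp add: Fp_def F_mult)
lemma Fp_monom: "c \<in> F \<Longrightarrow> Fp (monom c n)" by (simp add: Fp_def coeff_monom F0)
lemma Fp_mult: "Fp q \<Longrightarrow> Fp r \<Longrightarrow> Fp (q * r)"
  unfolding Fp_def coeff_mult by (auto intro!: F_sum F_mult)
lemma Fp_prod: "(\<And>i. i \<in> A \<Longrightarrow> Fp (f i)) \<Longrightarrow> Fp (prod f A)"
  by (induction A rule: infinite_finite_induct) (auto intro: Fp_1 Fp_mult)
lemma Fp_power: "Fp q \<Longrightarrow> Fp (q ^ n)"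
  by (induction n) (auto intro: Fp_1 Fp_mult)
lemma Fp_pcomp: "c \<in> F \<Longrightarrow> Fp q \<Longrightarrow> Fp (pcompose q [:0, c:])"
  by (simp add: Fp_def coeff_pcompose_linear F_mult F_power)
lemma Fp_coeff: "Fp q \<Longrightarrow> coeff q i \<in> F" by (simp add: Fp_def)

lemma Fp_div:
  assumes g: "Fp g" "lead_coeff g = 1" and h: "Fp h"
  shows "\<exists>s r. Fp s \<and> Fp r \<and> h = s * g + r \<and> (r = 0 \<or> degree r < degree g)"
proof (cases "degree g = 0")
  case True
  then obtain c where "g = [:c:]" by (auto elim!: degree_eq_zeroE)
  hence "g = 1" using g(2) by (simp add: one_pCons)
  thus ?thesis using h Fp_0 by auto
next
  case False
  show ?thesis using h
  proof (induction "degree h" arbitrary: h rule: less_induct)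
    case less
    show ?case
    proof (cases "h = 0 \<or> degree h < degree g")
      case True
      thus ?thesis using less.prems Fp_0 by (intro exI[of _ 0] exI[of _ h]) auto
    next
      case hc: False
      define k where "k = degree h - degree g"
      define c where "c = lead_coeff h"
      define h' where "h' = h - monom c k * g"
      have cF: "c \<in> F" unfolding c_def using less.prems by (simp add: Fp_coeff)
      have Fh': "Fp h'" unfolding h'_def using less.prems g cF by (intro Fp_diff Fp_mult Fp_monom)
      have kd: "k + degree g = degree h" using hc k_def by simp
      have d1: "degree (monom c k * g) \<le> degree h"
        using degree_mult_le[of "monom c k" g] degree_monom_le[of c k] kd by linarith
      have dk: "degree h - k = degree g" using kd by simp
      have "coeff (monom c k * g) (degree h) = c"
        using kd g(2) by (simp add: coeff_monom_mult dk)
      hence c0: "coeff h' (degree h) = 0" unfolding h'_def c_def by simp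
      have d2: "degree h' \<le> degree h" unfolding h'_def
        using degree_diff_le[OF order.refl d1] by simp
      have lt: "degree h' < degree h"
      proof (cases "h' = 0")
        case True thus ?thesis using kd False by simp
      next
        case False
        hence "coeff h' (degree h') \<noteq> 0" by simp
        hence "degree h' \<noteq> degree h" using c0 by metis
        thus ?thesis using d2 by linarith
      qed
      obtain s r where sr: "Fp s" "Fp r" "h' = s * g + r" "r = 0 \<or> degree r < degree g"
        using less.hyps[OF lt Fh'] by blast
      have "h = (s + monom c k) * g + r" using sr(3) unfolding h'_def by (simp add: algebra_simps)
      moreover have "Fp (s + monom c k)" using sr(1) cF by (intro Fp_add Fp_monom)
      ultimately show ?thesis using sr by blast
    qed
  qed
qed

definition Pa :: "'k poly" where "Pa = monom 1 p - [:a:]"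

lemma poly_Pa: "poly Pa x = x ^ p - a" by (simp add: Pa_def poly_monom)
lemma Fp_Pa: "Fp Pa" unfolding Pa_def by (intro Fp_diff Fp_monom Fp_const F1 aF)
lemma coeff_Pa: "coeff Pa p = 1" using p_pos by (simp add: Pa_def coeff_pCons split: nat.split)
lemma degree_Pa: "degree Pa = p"
proof -
  have "degree Pa \<le> p"
    using degree_diff_le_max[of "monom 1 p" "[:a:]"] degree_monom_le[of "1::'k" p] by (simp add: Pa_def)
  moreover have "degree Pa \<ge> p" using coeff_Pa by (simp add: le_degree)
  ultimately show ?thesis by simp
qed
lemma lead_Pa: "lead_coeff Pa = 1" using degree_Pa coeff_Pa by simp

end

context kummer begin

lemma al_pow_F_imp: assumes "0 < d" "d < p" "al ^ d \<in> F" shows False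
proof -
  have "\<not> p dvd d" using assms(1,2) by (auto dest: dvd_imp_le)
  hence "coprime p d" using prime_imp_coprime[OF p_prime] by blast
  hence g1: "gcd d p = 1" by (simp add: coprime_iff_gcd_eq_1 gcd.commute)
  obtain x y where xy: "d * x = p * y + 1" using bezout_nat[of d p] assms(1) g1 by auto
  have "(al ^ d) ^ x = a ^ y * al"
    by (simp add: power_mult[symmetric] xy power_add al_p[symmetric])
  hence eq: "al = (al ^ d) ^ x / a ^ y" using a_nz by (simp add: field_simps)
  have "(al ^ d) ^ x / a ^ y \<in> F" using assms(3) aF by (simp add: F_divide F_power)
  hence "al \<in> F" by (simp only: eq[symmetric])
  thus False using a_np al_p by blast
qed

definition Ral :: "'k set" where "Ral = (\<lambda>c. c * al) ` mu"

lemma finite_Ral: "finite Ral" by (simp add: Ral_def finite_mu)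
lemma card_Ral: "card Ral = p"
  unfolding Ral_def using card_mu al_nz by (subst card_image) (auto intro: inj_onI)
lemma Pa_prod: "Pa = (\<Prod>x\<in>Ral. [:-x,1:])"
proof (rule prod_linear_eq)
  show "finite Ral" by (rule finite_Ral)
  show "lead_coeff Pa = 1" by (rule lead_Pa)
  show "card Ral = degree Pa" using card_Ral degree_Pa by simp
  show "\<forall>x\<in>Ral. poly Pa x = 0"
    by (auto simp: Ral_def poly_Pa mu_def power_mult_distrib al_p)
qed

lemma indep: assumes "Fp g" "g \<noteq> 0" "poly g al = 0" shows "p \<le> degree g"
proof (rule ccontr)
  assume "\<not> p \<le> degree g"
  define Q where "Q = (\<lambda>n. \<exists>g. Fp g \<and> g \<noteq> 0 \<and> poly g al = 0 \<and> degree g = n)"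
  define d where "d = (LEAST n. Q n)"
  have Qg: "Q (degree g)" using assms Q_def by blast
  hence "Q d" unfolding d_def by (rule LeastI)
  then obtain g0 where g0: "Fp g0" "g0 \<noteq> 0" "poly g0 al = 0" "degree g0 = d" unfolding Q_def by blast
  have dle: "d \<le> degree g" unfolding d_def using Qg by (rule Least_le)
  have mini: "d \<le> degree r" if "Fp r" "r \<noteq> 0" "poly r al = 0" for r
    unfolding d_def using that Q_def by (intro Least_le) blast
  define m where "m = smult (inverse (lead_coeff g0)) g0"
  have lc0: "lead_coeff g0 \<noteq> 0" using g0(2) by simp
  have Fm: "Fp m" unfolding m_def using g0(1) by (intro Fp_smult F_inverse Fp_coeff)
  have lm: "lead_coeff m = 1" unfolding m_def using lc0 by simp
  have dm: "degree m = d" unfolding m_def using lc0 g0(4) by simp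
  have pm: "poly m al = 0" unfolding m_def using g0(3) by simp
  have d0: "d \<noteq> 0"
  proof
    assume "d = 0"
    then obtain c where "m = [:c:]" using dm by (auto elim!: degree_eq_zeroE)
    hence "m = 1" using lm by (simp add: one_pCons)
    thus False using pm by simp
  qed
  obtain s r where sr: "Fp s" "Fp r" "Pa = s * m + r" "r = 0 \<or> degree r < degree m"
    using Fp_div[OF Fm lm Fp_Pa] by blast
  have "poly r al = 0" using sr(3) pm poly_Pa[of al] al_p
    by (metis add.right_neutral add_0 diff_self mult_zero_right poly_add poly_mult)
  hence "r = 0" using sr(2,4) mini[of r] dm by fastforce
  hence "m dvd (\<Prod>x\<in>Ral. [:-x,1:])" using sr(3) Pa_prod by (metis add.right_neutral dvd_triv_right)
  then obtain I where I: "I \<subseteq> Ral" "m = (\<Prod>x\<in>I. [:-x,1:])"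
    using split_lemma[OF finite_Ral _ lm] by blast
  have finI: "finite I" using I(1) finite_Ral finite_subset by blast
  have "degree m = (\<Sum>x\<in>I. degree [:-x,(1::'k):])" unfolding I(2)
    by (rule degree_prod_eq_sum_degree) simp
  hence cI: "card I = d" using dm by simp
  have "coeff m 0 = poly m 0" by (simp add: poly_0_coeff_0)
  also have "\<dots> = (\<Prod>x\<in>I. - x)" unfolding I(2) poly_prod by simp
  also have "\<dots> = (\<Prod>x\<in>I. - (x / al) * al)" using al_nz by (intro prod.cong) auto
  also have "\<dots> = (\<Prod>x\<in>I. - (x / al)) * (\<Prod>x\<in>I. al)" by (rule prod.distrib)
  also have "\<dots> = (\<Prod>x\<in>I. - (x / al)) * al ^ d" using cI by simp
  finally have eq: "coeff m 0 = (\<Prod>x\<in>I. - (x / al)) * al ^ d" .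
  have xmu: "x / al \<in> mu" if "x \<in> I" for x using that I(1) al_nz by (auto simp: Ral_def)
  have uF: "(\<Prod>x\<in>I. - (x / al)) \<in> F" using xmu by (intro F_prod F_uminus mu_F) 
  have "\<forall>x\<in>I. x \<noteq> 0" using xmu mu_nz by fastforce
  hence u0: "(\<Prod>x\<in>I. - (x / al)) \<noteq> 0" using finI al_nz by (simp add: prod_zero_iff)
  have "al ^ d = coeff m 0 / (\<Prod>x\<in>I. - (x / al))" using eq u0 by (simp add: field_simps)
  hence "al ^ d \<in> F" using uF Fm by (simp add: F_divide Fp_coeff)
  moreover have "d < p" using dle \<open>\<not> p \<le> degree g\<close> by simp
  ultimately show False using al_pow_F_imp d0 by blast
qed

end

context kummer begin

lemma Fp_reduce:
  assumes "Fp q"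
  obtains r where "Fp r" "r = 0 \<or> degree r < p" "\<And>b. b ^ p = a \<Longrightarrow> poly q b = poly r b"
proof -
  obtain s r where sr: "Fp s" "Fp r" "q = s * Pa + r" "r = 0 \<or> degree r < degree Pa"
    using Fp_div[OF Fp_Pa lead_Pa assms] by blast
  have "poly q b = poly r b" if "b ^ p = a" for b using sr(3) that by (simp add: poly_Pa)
  thus ?thesis using that sr degree_Pa by auto
qed

lemma conj0: assumes "Fp q" "poly q al = 0" "b ^ p = a" shows "poly q b = 0"
proof -
  obtain r where r: "Fp r" "r = 0 \<or> degree r < p" "\<And>b. b ^ p = a \<Longrightarrow> poly q b = poly r b"
    using Fp_reduce[OF assms(1)] by blast
  have "poly r al = 0" using r(3)[OF al_p] assms(2) by simp
  hence "r = 0" using indep[OF r(1)] r(2) by fastforce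
  thus ?thesis using r(3)[OF assms(3)] by simp
qed

lemma mu_pow: "c \<in> mu \<Longrightarrow> (c * b) ^ p = b ^ p" by (simp add: mu_def power_mult_distrib)
lemma xi_mu: "xi ^ j \<in> mu" using xi_p by (simp add: mu_def power_mult[symmetric] mult.commute[of j p] power_mult)

lemma conj_eq: assumes "Fp q" "Fp q'" "poly q al = poly q' al" "c \<in> mu"
  shows "poly q (c * al) = poly q' (c * al)"
proof -
  have "poly (q - q') (c * al) = 0"
    using conj0[of "q - q'" "c * al"] assms Fp_diff mu_pow[OF assms(4)] al_p by simp
  thus ?thesis by simp
qed

lemma fixed_F: assumes "Fp q" "poly q (xi * al) = poly q al" shows "poly q al \<in> F"
proof -
  obtain r where r: "Fp r" "r = 0 \<or> degree r < p" "\<And>b. b ^ p = a \<Longrightarrow> poly q b = poly r b"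
    using Fp_reduce[OF assms(1)] by blast
  have xa: "(xi * al) ^ p = a" using mu_pow[of xi al] xi_mu[of 1] al_p by simp
  have e: "poly r (xi * al) = poly r al" using assms(2) r(3)[OF xa] r(3)[OF al_p] by simp
  define r' where "r' = r - pcompose r [:0, xi:]"
  have Fr': "Fp r'" unfolding r'_def using r(1) xiF by (intro Fp_diff Fp_pcomp)
  have pr': "poly r' al = 0" unfolding r'_def using e by (simp add: poly_pcompose mult.commute)
  have "degree (pcompose r [:0, xi:]) \<le> degree r" using degree_pcompose_le[of r "[:0, xi:]"] xi_nz by simp
  hence "degree r' \<le> degree r" unfolding r'_def using degree_diff_le by blast
  hence "r' = 0"
  proof (cases "r = 0")
    case True thus ?thesis unfolding r'_def by simp
  next
    case False
    hence "degree r < p" using r(2) by simp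
    thus ?thesis using indep[OF Fr' _ pr'] \<open>degree r' \<le> degree r\<close> by fastforce
  qed
  hence ci: "coeff r i = xi ^ i * coeff r i" for i
    unfolding r'_def using coeff_pcompose_linear[of r xi i] by (metis eq_iff_diff_eq_0)
  have c0: "coeff r (Suc m) = 0" for m
  proof (cases "Suc m < p")
    case True
    have "xi ^ Suc m \<noteq> 1" using xi_pow_ne1 True by blast
    thus ?thesis using ci[of "Suc m"] by (metis mult_cancel_right2)
  next
    case False
    thus ?thesis using r(2) by (metis coeff_0 coeff_eq_0 less_le_trans not_le)
  qed
  have "r = [:coeff r 0:]"
    by (rule poly_eqI) (simp add: coeff_pCons c0 split: nat.split)
  hence "poly r al = coeff r 0" by (metis poly_pCons poly_0 mult_zero_right add.right_neutral)
  thus ?thesis using r(3)[OF al_p] r(1) by (simp add: Fp_coeff)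
qed

definition qs :: "'k poly \<Rightarrow> nat \<Rightarrow> 'k poly" where "qs q j = pcompose q [:0, xi ^ j:]"
lemma poly_qs: "poly (qs q j) b = poly q (xi ^ j * b)" by (simp add: qs_def poly_pcompose mult.commute)
lemma Fp_qs: "Fp q \<Longrightarrow> Fp (qs q j)" unfolding qs_def by (intro Fp_pcomp F_power xiF)

definition Sp :: "'k set" where "Sp = {poly q al | q. Fp q}"

lemma Sp_inverse: assumes "Fp q" "poly q al \<noteq> 0" shows "inverse (poly q al) \<in> Sp"
proof -
  define x where "x = poly q al"
  define f where "f = (\<lambda>j. poly q (xi ^ j * al))"
  define M where "M = (\<Prod>j<p. f j)"
  obtain n where pn: "p = Suc n" using p_pos gr0_conv_Suc by blast
  have MQ: "M = poly (\<Prod>j<p. qs q j) al" unfolding M_def f_def by (simp add: poly_prod poly_qs)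
  have f0: "f 0 = x" "f p = x" unfolding f_def x_def by (simp_all add: xi_p)
  have "poly (\<Prod>j<p. qs q j) (xi * al) = (\<Prod>j<p. f (Suc j))"
    unfolding f_def poly_prod poly_qs by (intro prod.cong refl) (simp add: ac_simps)
  also have "\<dots> = M"
  proof -
    have A: "(\<Prod>j<p. f (Suc j)) = (\<Prod>j<n. f (Suc j)) * f (Suc n)" unfolding pn by (rule prod.lessThan_Suc)
    have B: "M = f 0 * (\<Prod>j<n. f (Suc j))" unfolding M_def pn by (rule prod.lessThan_Suc_shift)
    show ?thesis using A B f0 pn by (simp add: mult.commute)
  qed
  finally have "M \<in> F" using fixed_F[of "\<Prod>j<p. qs q j"] MQ by (simp add: Fp_prod Fp_qs assms(1))
  have fnz: "f j \<noteq> 0" if "j < p" for j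
  proof
    assume "f j = 0"
    hence "poly (qs q j) al = 0" by (simp add: f_def poly_qs)
    moreover have "(xi ^ (p - j) * al) ^ p = a" using mu_pow[OF xi_mu] al_p by simp
    ultimately have "poly (qs q j) (xi ^ (p - j) * al) = 0" using conj0 Fp_qs assms(1) by blast
    moreover have "xi ^ j * (xi ^ (p - j) * al) = xi ^ p * al"
      using that by (simp add: mult.assoc[symmetric] power_add[symmetric])
    ultimately have "poly q (xi ^ p * al) = 0" by (simp add: poly_qs)
    thus False using assms(2) xi_p by simp
  qed
  hence M0: "M \<noteq> 0" unfolding M_def by simp
  define R where "R = (\<Prod>j<n. f (Suc j))"
  have "M = x * R" unfolding M_def R_def pn prod.lessThan_Suc_shift using f0 by simp
  hence "inverse x = R * inverse M" using M0 by (simp add: field_simps)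
  moreover have "R = poly ((\<Prod>j<n. qs q (Suc j)) * [:inverse M:]) al * M"
    using M0 by (simp add: R_def f_def poly_prod poly_qs)
  ultimately have "inverse x = poly ((\<Prod>j<n. qs q (Suc j)) * [:inverse M:]) al"
    using M0 by simp
  moreover have "Fp ((\<Prod>j<n. qs q (Suc j)) * [:inverse M:])"
    using \<open>M \<in> F\<close> assms(1) by (intro Fp_mult Fp_prod Fp_qs Fp_const F_inverse)
  ultimately show ?thesis unfolding Sp_def x_def by blast
qed

lemma Sp_subfield: "is_subfield Sp"
  unfolding is_subfield_def
proof (intro conjI ballI impI)
  show "0 \<in> Sp" unfolding Sp_def using Fp_0 by force
  show "1 \<in> Sp" unfolding Sp_def using Fp_1 by force
  fix x assume "x \<in> Sp"
  then obtain q where q: "Fp q" "x = poly q al" unfolding Sp_def by blast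
  show "- x \<in> Sp" unfolding Sp_def using q Fp_uminus by force
  { assume "x \<noteq> 0" thus "inverse x \<in> Sp" using Sp_inverse q by simp }
  fix y assume "y \<in> Sp"
  then obtain r where r: "Fp r" "y = poly r al" unfolding Sp_def by blast
  show "x + y \<in> Sp" unfolding Sp_def using q r Fp_add by (intro CollectI exI[of _ "q + r"]) simp
  show "x * y \<in> Sp" unfolding Sp_def using q r Fp_mult by (intro CollectI exI[of _ "q * r"]) simp
qed

lemma span: "\<exists>q. Fp q \<and> x = poly q al"
proof -
  have "F \<subseteq> Sp" unfolding Sp_def using Fp_const by (force intro!: exI[of _ "[:_:]"])
  moreover have "al \<in> Sp" unfolding Sp_def
    using Fp_pCons[OF F0 Fp_const[OF F1]] by (intro CollectI exI[of _ "[:0,1:]"]) simp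
  ultimately have "Sp = UNIV" using al_gen Sp_subfield by (simp add: generated_by_def)
  thus ?thesis unfolding Sp_def by blast
qed

end

context kummer begin

definition rep :: "'k \<Rightarrow> 'k poly" where "rep x = (SOME q. Fp q \<and> x = poly q al)"
lemma rep: "Fp (rep x)" "x = poly (rep x) al"
  using someI_ex[OF span[of x]] unfolding rep_def by blast+

definition sig :: "'k \<Rightarrow> 'k \<Rightarrow> 'k" where "sig c x = poly (rep x) (c * al)"

lemma sig_poly: assumes "c \<in> mu" "Fp q" shows "sig c (poly q al) = poly q (c * al)"
  unfolding sig_def using conj_eq[OF rep(1) assms(2) _ assms(1)] rep(2) by metis

lemma sig_gen: assumes "c \<in> mu" obtains q where "Fp q" "x = poly q al" "sig c x = poly q (c * al)"
  using rep sig_poly assms by metis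

lemma sig_add: "c \<in> mu \<Longrightarrow> sig c (x + y) = sig c x + sig c y"
proof -
  assume c: "c \<in> mu"
  obtain q where q: "Fp q" "x = poly q al" using span by blast
  obtain r where r: "Fp r" "y = poly r al" using span by blast
  have "x + y = poly (q + r) al" using q r by simp
  thus ?thesis using sig_poly[OF c Fp_add[OF q(1) r(1)]] sig_poly[OF c q(1)] sig_poly[OF c r(1)] q(2) r(2) by simp
qed

lemma sig_mult: "c \<in> mu \<Longrightarrow> sig c (x * y) = sig c x * sig c y"
proof -
  assume c: "c \<in> mu"
  obtain q where q: "Fp q" "x = poly q al" using span by blast
  obtain r where r: "Fp r" "y = poly r al" using span by blast
  have "x * y = poly (q * r) al" using q r by simp
  thus ?thesis using sig_poly[OF c Fp_mult[OF q(1) r(1)]] sig_poly[OF c q(1)] sig_poly[OF c r(1)] q(2) r(2) by simp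
qed

lemma sig_F: "c \<in> mu \<Longrightarrow> f \<in> F \<Longrightarrow> sig c f = f"
  using sig_poly[of c "[:f:]"] Fp_const by simp

lemma sig_0: "c \<in> mu \<Longrightarrow> sig c 0 = 0" using sig_F F0 by blast
lemma sig_one: "c \<in> mu \<Longrightarrow> sig c 1 = 1" using sig_F F1 by blast

lemma sig_al: "c \<in> mu \<Longrightarrow> sig c al = c * al"
  using sig_poly[of c "[:0,1:]"] Fp_pCons[OF F0 Fp_const[OF F1]] by simp

lemma mu_mult: "c \<in> mu \<Longrightarrow> d \<in> mu \<Longrightarrow> c * d \<in> mu" by (simp add: mu_def power_mult_distrib)
lemma one_mu: "1 \<in> mu" by (simp add: mu_def)

lemma sig_comp: assumes "c \<in> mu" "d \<in> mu" shows "sig c (sig d x) = sig (c * d) x"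
proof -
  obtain q where q: "Fp q" "x = poly q al" using span by blast
  have "sig d x = poly (pcompose q [:0, d:]) al" using sig_poly[OF assms(2) q(1)] q(2)
    by (simp add: poly_pcompose mult.commute)
  hence "sig c (sig d x) = poly (pcompose q [:0, d:]) (c * al)"
    using sig_poly[OF assms(1)] Fp_pcomp[OF mu_F[OF assms(2)] q(1)] by simp
  also have "\<dots> = poly q ((c * d) * al)" by (simp add: poly_pcompose ac_simps)
  also have "\<dots> = sig (c * d) x" using sig_poly[OF mu_mult[OF assms] q(1)] q(2) by simp
  finally show ?thesis .
qed

lemma sig_id: "sig 1 x = x"
proof -
  obtain q where q: "Fp q" "x = poly q al" using span by blast
  thus ?thesis using sig_poly[OF one_mu q(1)] by simp
qed

lemma mu_inv: assumes "c \<in> mu" shows "c ^ (p - 1) \<in> mu \<and> c * c ^ (p - 1) = 1"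
proof -
  have c: "c ^ p = 1" using assms by (simp add: mu_def)
  have "(c ^ (p - 1)) ^ p = (c ^ p) ^ (p - 1)" by (simp add: power_mult[symmetric] mult.commute)
  moreover have "c * c ^ (p - 1) = c ^ p" using p_pos by (simp add: power_Suc[symmetric] del: power_Suc)
  ultimately show ?thesis using c by (simp add: mu_def)
qed

lemma sig_bij: assumes "c \<in> mu" shows "bij (sig c)"
proof -
  define d where "d = c ^ (p - 1)"
  have d: "d \<in> mu" "c * d = 1" "d * c = 1" using mu_inv[OF assms] d_def by (auto simp: mult.commute)
  have "sig c (sig d x) = x" for x using sig_comp[OF assms d(1)] d(2) sig_id by simp
  moreover have "sig d (sig c x) = x" for x using sig_comp[OF d(1) assms] d(3) sig_id by simp
  ultimately show ?thesis by (metis bij_betw_byWitness subset_UNIV UNIV_I)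
qed

lemma sig_Gal: "c \<in> mu \<Longrightarrow> sig c \<in> Gal F"
  unfolding Gal_def is_field_aut_def using sig_bij sig_one sig_add sig_mult sig_F by blast

lemma aut_0: assumes "is_field_aut t" shows "t 0 = 0"
proof -
  have "t 0 + t 0 = t 0 + 0" using assms unfolding is_field_aut_def by (metis add_0 add_0_right)
  thus ?thesis by (simp only: add_left_cancel)
qed
lemma aut_power: "is_field_aut t \<Longrightarrow> t (x ^ n) = t x ^ n"
  unfolding is_field_aut_def by (induction n) auto
lemma aut_poly: assumes "t \<in> Gal F" "Fp q" shows "t (poly q x) = poly q (t x)"
  using assms(2)
proof (induction q)
  case 0 thus ?case using assms(1) aut_0 unfolding Gal_def by (simp only: poly_0 mem_Collect_eq) blast
next
  case (pCons b q)
  have "\<forall>i. coeff q i \<in> F" using pCons.prems unfolding Fp_def by (metis coeff_pCons_Suc)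
  hence "Fp q" unfolding Fp_def .
  moreover have "b \<in> F" using pCons.prems unfolding Fp_def by (metis coeff_pCons_0)
  ultimately show ?case using pCons.IH assms(1) by (simp add: Gal_def is_field_aut_def)
qed

lemma aut_nz: assumes "is_field_aut t" "x \<noteq> 0" shows "t x \<noteq> 0"
proof -
  have "inj t" using assms(1) unfolding is_field_aut_def using bij_is_inj by blast
  hence "t x \<noteq> t 0" using assms(2) by (simp add: inj_eq)
  thus ?thesis using aut_0[OF assms(1)] by simp
qed

lemma Gal_eq: "Gal F = sig ` mu"
proof
  show "sig ` mu \<subseteq> Gal F" using sig_Gal by blast
  show "Gal F \<subseteq> sig ` mu"
  proof
    fix t assume t: "t \<in> Gal F"
    hence ta: "is_field_aut t" by (simp add: Gal_def)
    define c where "c = t al / al"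
    have "t al ^ p = a" using aut_power[OF ta, of al p] al_p t aF by (simp add: Gal_def)
    hence cmu: "c \<in> mu" unfolding c_def mu_def using al_nz al_p a_nz by (simp add: power_divide)
    have tal: "t al = c * al" unfolding c_def using al_nz by simp
    have "t x = sig c x" for x
    proof -
      obtain q where q: "Fp q" "x = poly q al" using span by blast
      show ?thesis using aut_poly[OF t q(1)] sig_poly[OF cmu q(1)] q(2) tal by simp
    qed
    thus "t \<in> sig ` mu" using cmu by blast
  qed
qed

lemma sig_inj: "inj_on sig mu"
proof (rule inj_onI)
  fix c d assume "c \<in> mu" "d \<in> mu" "sig c = sig d"
  hence "c * al = d * al" using sig_al by metis
  thus "c = d" using al_nz by simp
qed

lemma norm_eq: "normKF F x = (\<Prod>c\<in>mu. sig c x)"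
  unfolding normKF_def Gal_eq using prod.reindex[OF sig_inj, of "\<lambda>s. s x"] by simp

lemma sig_nz: "c \<in> mu \<Longrightarrow> x \<noteq> 0 \<Longrightarrow> sig c x \<noteq> 0"
  using aut_nz sig_Gal by (auto simp: Gal_def)

lemma sig_prod: "c \<in> mu \<Longrightarrow> sig c (prod f A) = (\<Prod>i\<in>A. sig c (f i))"
  by (induction A rule: infinite_finite_induct) (auto simp: sig_one sig_mult)

lemma sig_power: "c \<in> mu \<Longrightarrow> sig c (x ^ n) = sig c x ^ n"
  by (induction n) (auto simp: sig_one sig_mult)

lemma sig_divide: assumes c: "c \<in> mu" shows "sig c (x / y) = sig c x / sig c y"
proof (cases "y = 0")
  case True thus ?thesis using sig_0[OF c] by simp
next
  case False
  have "sig c (x / y) * sig c y = sig c x" using sig_mult[OF c, of "x / y" y] False by simp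
  thus ?thesis using sig_nz[OF c False] by (simp add: field_simps)
qed

lemma fixed_sig: assumes "sig xi x = x" shows "x \<in> F"
proof -
  obtain q where q: "Fp q" "x = poly q al" using span by blast
  have "poly q (xi * al) = poly q al" using sig_poly[OF xi_mu[of 1]] q assms by simp
  thus ?thesis using fixed_F q by simp
qed

end

context kummer begin

abbreviation S :: "nat \<Rightarrow> 'k \<Rightarrow> 'k" where "S j \<equiv> sig (xi ^ j)"

lemma xm: "xi \<in> mu" using xi_mu[of 1] by simp

lemma S_Suc: "sig xi (S j x) = S (Suc j) x"
  using sig_comp[OF xi_mu[of 1] xi_mu[of j]] by simp
lemma S_0: "S 0 x = x" using sig_id by simp
lemma S_p: "S p x = x" using sig_id xi_p by simp

lemma norm_S: "normKF F x = (\<Prod>j<p. S j x)"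
proof -
  have "inj_on (\<lambda>j. xi ^ j) {..<p}" by (auto intro!: inj_onI xi_pow_inj)
  thus ?thesis unfolding norm_eq mu_eq using prod.reindex[of "\<lambda>j. xi ^ j" "{..<p}" "\<lambda>c. sig c x"] by simp
qed

lemma norm_mult: "normKF F (x * y) = normKF F x * normKF F y"
  unfolding norm_eq using sig_mult by (simp add: prod.distrib)
lemma norm_power: "normKF F (x ^ n) = normKF F x ^ n"
  unfolding norm_eq using sig_power by (simp add: prod_power_distrib)
lemma norm_nz: "x \<noteq> 0 \<Longrightarrow> normKF F x \<noteq> 0"
  unfolding norm_eq using sig_nz finite_mu by simp
lemma norm_Fel: "f \<in> F \<Longrightarrow> normKF F f = f ^ p"
  unfolding norm_eq using sig_F card_mu by simp

lemma mu_shift: "(\<lambda>c. xi * c) ` mu = mu"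
proof
  show "(\<lambda>c. xi * c) ` mu \<subseteq> mu" using mu_mult xi_mu[of 1] by auto
  show "mu \<subseteq> (\<lambda>c. xi * c) ` mu"
  proof
    fix c assume c: "c \<in> mu"
    obtain d where d: "d \<in> mu" "xi * d = 1" using mu_inv[OF xi_mu[of 1]] by auto
    have "c = xi * (d * c)" using d(2) by (simp add: mult.assoc[symmetric])
    thus "c \<in> (\<lambda>c. xi * c) ` mu" using mu_mult[OF d(1) c] by blast
  qed
qed

lemma norm_fixed: "sig xi (normKF F x) = normKF F x"
proof -
  have "sig xi (normKF F x) = (\<Prod>c\<in>mu. sig xi (sig c x))"
    unfolding norm_eq by (rule sig_prod[OF xm])
  also have "\<dots> = (\<Prod>c\<in>mu. sig (xi * c) x)"
    by (rule prod.cong[OF refl]) (rule sig_comp[OF xm])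
  also have "\<dots> = (\<Prod>c\<in>(\<lambda>c. xi * c) ` mu. sig c x)"
    by (rule prod.reindex[symmetric, unfolded comp_def]) (auto intro: inj_onI simp: xi_nz)
  also have "\<dots> = normKF F x" unfolding mu_shift norm_eq ..
  finally show ?thesis .
qed

lemma norm_F: "normKF F x \<in> F" using fixed_sig norm_fixed by blast

lemma mu_xi: "c \<in> mu \<Longrightarrow> \<exists>k<p. c = xi ^ k" using mu_eq by auto

lemma kummer_lemma:
  assumes "f \<in> F" "b ^ p = f" "b \<noteq> 0"
  shows "\<exists>k g. g \<in> F \<and> g \<noteq> 0 \<and> f = a ^ k * g ^ p"
proof -
  define c where "c = sig xi b / b"
  have "c ^ p = sig xi (b ^ p) / b ^ p" unfolding c_def by (simp add: sig_power[OF xm] power_divide)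
  moreover have "f \<noteq> 0" using assms(2,3) by auto
  ultimately have "c ^ p = 1" using assms sig_F[OF xm] by simp
  then obtain k where k: "c = xi ^ k" using mu_xi mu_iff by blast
  define g where "g = b / al ^ k"
  have sb: "sig xi b = xi ^ k * b" using k assms(3) unfolding c_def by (simp add: divide_eq_eq)
  have "sig xi g = sig xi b / sig xi al ^ k" unfolding g_def by (simp add: sig_divide[OF xm] sig_power[OF xm])
  also have "\<dots> = g" using sb sig_al[OF xm] xi_nz by (simp add: g_def power_mult_distrib)
  finally have gF: "g \<in> F" using fixed_sig by blast
  have g0: "g \<noteq> 0" unfolding g_def using assms(3) al_nz by simp
  have "b = g * al ^ k" unfolding g_def using al_nz by simp
  hence "f = g ^ p * (al ^ k) ^ p" using assms(2) by (simp add: power_mult_distrib)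
  also have "(al ^ k) ^ p = a ^ k" using al_p by (simp add: power_mult[symmetric] mult.commute[of k p]) (simp add: power_mult)
  finally have "f = a ^ k * g ^ p" by simp
  thus ?thesis using gF g0 by blast
qed

end

context kummer begin

definition gj :: "'k \<Rightarrow> nat \<Rightarrow> 'k" where "gj g j = (\<Prod>i<j. S i g)"

lemma gj_0: "gj g 0 = 1" by (simp add: gj_def)
lemma gj_p: "gj g p = normKF F g" by (simp add: gj_def norm_S)
lemma gj_nz: "g \<noteq> 0 \<Longrightarrow> gj g j \<noteq> 0" unfolding gj_def using sig_nz xi_mu by simp
lemma gj_sig: "sig xi (gj g j) * g = gj g (Suc j)"
proof -
  have "sig xi (gj g j) = (\<Prod>i<j. S (Suc i) g)"
    unfolding gj_def by (simp add: sig_prod[OF xm] S_Suc)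
  moreover have "gj g (Suc j) = S 0 g * (\<Prod>i<j. S (Suc i) g)"
    unfolding gj_def by (rule prod.lessThan_Suc_shift)
  ultimately show ?thesis using S_0 by (simp add: mult.commute)
qed

lemma S_theta: assumes "sig xi t = t * g ^ p" shows "S j t = t * (gj g j) ^ p"
proof (induction j)
  case 0 thus ?case using S_0 gj_0 by simp
next
  case (Suc j)
  have "S (Suc j) t = sig xi (S j t)" using S_Suc by simp
  also have "\<dots> = sig xi t * sig xi (gj g j) ^ p" using Suc by (simp add: sig_mult[OF xm] sig_power[OF xm])
  also have "\<dots> = t * (g * sig xi (gj g j)) ^ p" using assms by (simp add: power_mult_distrib)
  also have "\<dots> = t * gj g (Suc j) ^ p" using gj_sig[of g j] by (simp add: mult.commute)
  finally show ?case .
qed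

lemma delta:
  assumes "sig xi t = t * g ^ p"
  defines "d \<equiv> t * (\<Prod>j<p. gj g j)"
  shows "d ^ p = normKF F t" "sig xi d = d * normKF F g"
proof -
  show "d ^ p = normKF F t"
    unfolding d_def norm_S S_theta[OF assms(1)]
    using card_lessThan[of p] by (simp add: power_mult_distrib prod.distrib prod_power_distrib)
  have A: "(\<Prod>j<Suc p. gj g j) = gj g 0 * (\<Prod>j<p. gj g (Suc j))" by (rule prod.lessThan_Suc_shift)
  have B: "(\<Prod>j<Suc p. gj g j) = (\<Prod>j<p. gj g j) * gj g p" by (rule prod.lessThan_Suc)
  have C: "(\<Prod>j<p. gj g (Suc j)) = (\<Prod>j<p. gj g j) * normKF F g" using A B gj_0 gj_p by simp
  have "sig xi d = sig xi t * (\<Prod>j<p. sig xi (gj g j))"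
    unfolding d_def by (simp add: sig_mult[OF xm] sig_prod[OF xm])
  also have "\<dots> = t * (\<Prod>j<p. g * sig xi (gj g j))"
    using assms(1) card_lessThan[of p] by (simp add: prod.distrib)
  also have "\<dots> = t * (\<Prod>j<p. gj g (Suc j))" using gj_sig by (simp add: mult.commute)
  also have "\<dots> = d * normKF F g" unfolding C d_def by (simp add: mult.assoc)
  finally show "sig xi d = d * normKF F g" .
qed

lemma sig_sum: "c \<in> mu \<Longrightarrow> sig c (sum f A) = (\<Sum>i\<in>A. sig c (f i))"
  by (induction A rule: infinite_finite_induct) (auto simp: sig_0 sig_add)

lemma S_al_pow: "S j (al ^ k) = (xi ^ j) ^ k * al ^ k"
  by (simp add: sig_power[OF xi_mu] sig_al[OF xi_mu] power_mult_distrib)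

lemma geo_xi: "j < p \<Longrightarrow> (\<Sum>k<p. (xi ^ j) ^ k) = (if j = 0 then of_nat p else 0)"
proof (cases "j = 0")
  case False
  assume j: "j < p"
  have "xi ^ j \<noteq> 1" using xi_pow_ne1 j False by simp
  moreover have "(xi ^ j) ^ p = 1" using xi_mu[of j] by (simp add: mu_def)
  ultimately show ?thesis using False by (simp add: geometric_sum)
qed simp

lemma hilbert90:
  assumes g0: "g \<noteq> 0" and ng: "normKF F g = 1"
  shows "\<exists>b. b \<noteq> 0 \<and> sig xi b = g * b"
proof -
  define h where "h t j = S j t / gj g j" for t j
  define B where "B t = (\<Sum>j<p. h t j)" for t
  have hs: "sig xi (h t j) = g * h t (Suc j)" for t j
  proof -
    have "sig xi (h t j) = S (Suc j) t / sig xi (gj g j)"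
      unfolding h_def by (simp add: sig_divide[OF xm] S_Suc)
    moreover have "sig xi (gj g j) = gj g (Suc j) / g" using gj_sig[of g j] g0 by (simp add: field_simps)
    ultimately show ?thesis unfolding h_def using g0 gj_nz[OF g0] by (simp add: field_simps)
  qed
  have Bs: "sig xi (B t) = g * B t" for t
  proof -
    have hp: "h t p = h t 0" unfolding h_def using S_p S_0 gj_p gj_0 ng by simp
    have "sig xi (B t) = g * (\<Sum>j<p. h t (Suc j))"
      unfolding B_def by (simp add: sig_sum[OF xm] sum_distrib_left hs)
    also have "(\<Sum>j<p. h t (Suc j)) = B t"
    proof -
      have A: "(\<Sum>j<Suc p. h t j) = h t 0 + (\<Sum>j<p. h t (Suc j))" by (rule sum.lessThan_Suc_shift)
      have B': "(\<Sum>j<Suc p. h t j) = (\<Sum>j<p. h t j) + h t p" by (rule sum.lessThan_Suc)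
      show ?thesis using A B' hp unfolding B_def by simp
    qed
    finally show ?thesis .
  qed
  have "\<exists>k<p. B (al ^ k) \<noteq> 0"
  proof (rule ccontr)
    assume "\<not> (\<exists>k<p. B (al ^ k) \<noteq> 0)"
    hence z: "B (al ^ k) = 0" if "k < p" for k using that by blast
    have Bk: "B (al ^ k) = al ^ k * (\<Sum>j<p. (xi ^ j) ^ k / gj g j)" for k
      unfolding B_def h_def S_al_pow sum_distrib_left by (rule sum.cong[OF refl]) (simp add: ac_simps)
    have z2: "(\<Sum>j<p. (xi ^ j) ^ k / gj g j) = 0" if "k < p" for k
      using z[OF that] Bk[of k] al_nz by simp
    have "0 = (\<Sum>k<p. \<Sum>j<p. (xi ^ j) ^ k / gj g j)" using z2 by simp
    also have "\<dots> = (\<Sum>j<p. (\<Sum>k<p. (xi ^ j) ^ k) / gj g j)"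
      by (subst sum.swap) (simp add: sum_divide_distrib)
    also have "\<dots> = (\<Sum>j<p. (if j = 0 then of_nat p / gj g 0 else 0))"
      by (rule sum.cong[OF refl]) (simp add: geo_xi)
    also have "\<dots> = of_nat p" using p_pos gj_0 by simp
    finally show False using p_char by simp
  qed
  then obtain k where "B (al ^ k) \<noteq> 0" by blast
  thus ?thesis using Bs by blast
qed

end

context kummer begin

lemma classK_eq_iff: assumes "t \<noteq> 0" "u \<noteq> 0"
  shows "classK p t = classK p u \<longleftrightarrow> (\<exists>y. y \<noteq> 0 \<and> t = u * y ^ p)"
proof
  assume "classK p t = classK p u"
  moreover have "t \<in> classK p t" unfolding classK_def by (intro CollectI exI[of _ 1]) simp
  ultimately show "\<exists>y. y \<noteq> 0 \<and> t = u * y ^ p" unfolding classK_def by blast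
next
  assume "\<exists>y. y \<noteq> 0 \<and> t = u * y ^ p"
  then obtain y where y: "y \<noteq> 0" "t = u * y ^ p" by blast
  show "classK p t = classK p u"
  proof (intro set_eqI iffI)
    fix z assume "z \<in> classK p t"
    then obtain w where w: "w \<noteq> 0" "z = t * w ^ p" unfolding classK_def by blast
    hence "z = u * (y * w) ^ p" using y by (simp add: power_mult_distrib)
    thus "z \<in> classK p u" unfolding classK_def using w y by auto
  next
    fix z assume "z \<in> classK p u"
    then obtain w where w: "w \<noteq> 0" "z = u * w ^ p" unfolding classK_def by blast
    hence "z = t * (w / y) ^ p" using y by (simp add: power_divide)
    thus "z \<in> classK p t" unfolding classK_def using w y by auto
  qed
qed

lemma classF_eq_iff: assumes "x \<in> F" "x \<noteq> 0" "y \<in> F" "y \<noteq> 0"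
  shows "classF F p x = classF F p y \<longleftrightarrow> (\<exists>z\<in>F. z \<noteq> 0 \<and> x = y * z ^ p)"
proof
  assume "classF F p x = classF F p y"
  moreover have "x \<in> classF F p x" unfolding classF_def using F1 by (intro CollectI exI[of _ 1]) simp
  ultimately show "\<exists>z\<in>F. z \<noteq> 0 \<and> x = y * z ^ p" unfolding classF_def by blast
next
  assume "\<exists>z\<in>F. z \<noteq> 0 \<and> x = y * z ^ p"
  then obtain y' where y: "y' \<in> F" "y' \<noteq> 0" "x = y * y' ^ p" by blast
  show "classF F p x = classF F p y"
  proof (intro set_eqI iffI)
    fix z assume "z \<in> classF F p x"
    then obtain w where w: "w \<in> F" "w \<noteq> 0" "z = x * w ^ p" unfolding classF_def by blast
    hence "z = y * (y' * w) ^ p" using y by (simp add: power_mult_distrib)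
    thus "z \<in> classF F p y" unfolding classF_def using w y F_mult by auto
  next
    fix z assume "z \<in> classF F p y"
    then obtain w where w: "w \<in> F" "w \<noteq> 0" "z = y * w ^ p" unfolding classF_def by blast
    hence "z = x * (w / y') ^ p" using y by (simp add: power_divide)
    thus "z \<in> classF F p x" unfolding classF_def using w y F_divide by auto
  qed
qed

lemma classK_sig: assumes "c \<in> mu" shows "sig c ` classK p t = classK p (sig c t)"
proof (intro set_eqI iffI)
  fix z assume "z \<in> sig c ` classK p t"
  then obtain y where "y \<noteq> 0" "z = sig c (t * y ^ p)" unfolding classK_def by blast
  thus "z \<in> classK p (sig c t)" unfolding classK_def
    using sig_nz[OF assms] by (auto simp: sig_mult[OF assms] sig_power[OF assms])
next
  fix z assume "z \<in> classK p (sig c t)"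
  then obtain w where w: "w \<noteq> 0" "z = sig c t * w ^ p" unfolding classK_def by blast
  obtain y where y: "sig c y = w" using sig_bij[OF assms] by (metis bij_pointE)
  have "y \<noteq> 0" using y w(1) sig_0[OF assms] by auto
  moreover have "z = sig c (t * y ^ p)" using w y by (simp add: sig_mult[OF assms] sig_power[OF assms])
  ultimately show "z \<in> sig c ` classK p t" unfolding classK_def by blast
qed

lemma J1_iff: assumes "t \<noteq> 0"
  shows "classK p t \<in> J1 F p \<longleftrightarrow> (\<exists>g. g \<noteq> 0 \<and> sig xi t = t * g ^ p)"
proof
  assume "classK p t \<in> J1 F p"
  hence "sig xi ` classK p t = classK p t" unfolding J1_def using sig_Gal[OF xm] by blast
  hence "classK p (sig xi t) = classK p t" using classK_sig[OF xm] by simp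
  thus "\<exists>g. g \<noteq> 0 \<and> sig xi t = t * g ^ p" using classK_eq_iff sig_nz[OF xm assms] assms by blast
next
  assume "\<exists>g. g \<noteq> 0 \<and> sig xi t = t * g ^ p"
  then obtain g where g: "g \<noteq> 0" "sig xi t = t * g ^ p" by blast
  have "\<forall>s\<in>Gal F. s ` classK p t = classK p t"
  proof
    fix s assume "s \<in> Gal F"
    then obtain c where c: "c \<in> mu" "s = sig c" using Gal_eq by blast
    then obtain j where j: "c = xi ^ j" using mu_xi by blast
    have "sig c t = t * gj g j ^ p" using S_theta[OF g(2)] j by simp
    hence "classK p (sig c t) = classK p t"
      using classK_eq_iff sig_nz[OF c(1) assms] assms gj_nz[OF g(1)] by blast
    thus "s ` classK p t = classK p t" using classK_sig c by simp
  qed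
  moreover have "classK p t \<in> JK p" unfolding JK_def using assms by blast
  ultimately show "classK p t \<in> J1 F p" unfolding J1_def by blast
qed

lemma gen_a_iff: "c \<in> gen_a F p a \<longleftrightarrow> (\<exists>k. c = classF F p (a ^ k))"
  unfolding gen_a_def by blast

lemma aF_pow: "a ^ k \<in> F" "a ^ k \<noteq> 0" using aF a_nz by (simp_all add: F_power)

lemma norm_class_gen:
  assumes "t \<noteq> 0" "classK p t \<in> J1 F p"
  shows "classF F p (normKF F t) \<in> gen_a F p a"
proof -
  obtain g where g: "g \<noteq> 0" "sig xi t = t * g ^ p" using J1_iff assms by blast
  define d where "d = t * (\<Prod>j<p. gj g j)"
  have d: "d ^ p = normKF F t" using delta(1)[OF g(2)] d_def by simp
  have "d \<noteq> 0" using d norm_nz[OF assms(1)] p_pos by (auto simp: zero_power)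
  then obtain k h where kh: "h \<in> F" "h \<noteq> 0" "normKF F t = a ^ k * h ^ p"
    using kummer_lemma[OF norm_F d] by blast
  hence "classF F p (normKF F t) = classF F p (a ^ k)"
    unfolding classF_eq_iff[OF norm_F norm_nz[OF assms(1)] aF_pow] by blast
  thus ?thesis unfolding gen_a_iff by blast
qed

lemma part_ker_eps: assumes "x \<in> F" "x \<noteq> 0"
  shows "classK p x = classK p 1 \<longleftrightarrow> classF F p x \<in> gen_a F p a"
proof
  assume "classK p x = classK p 1"
  then obtain y where y: "y \<noteq> 0" "x = 1 * y ^ p" unfolding classK_eq_iff[OF assms(2) one_neq_zero] by blast
  hence "y ^ p = x" by simp
  then obtain k h where kh: "h \<in> F" "h \<noteq> 0" "x = a ^ k * h ^ p"
    using kummer_lemma[OF assms(1) _ y(1)] by blast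
  hence "classF F p x = classF F p (a ^ k)" unfolding classF_eq_iff[OF assms aF_pow] by blast
  thus "classF F p x \<in> gen_a F p a" unfolding gen_a_iff by blast
next
  assume "classF F p x \<in> gen_a F p a"
  then obtain k where "classF F p x = classF F p (a ^ k)" unfolding gen_a_iff by blast
  then obtain z where z: "z \<in> F" "z \<noteq> 0" "x = a ^ k * z ^ p" unfolding classF_eq_iff[OF assms aF_pow] by blast
  have "x = 1 * (al ^ k * z) ^ p" using z(3) al_p
    by (simp add: power_mult_distrib power_mult[symmetric] mult.commute[of k p]) (simp add: power_mult)
  moreover have "al ^ k * z \<noteq> 0" using al_nz z(2) by simp
  ultimately show "classK p x = classK p 1" unfolding classK_eq_iff[OF assms(2) one_neq_zero] by blast
qed

end

context kummer begin

lemma mu_of_pow: assumes "x ^ p = y ^ p" "y \<noteq> 0" shows "x / y \<in> mu"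
  using assms by (simp add: mu_def power_divide)

lemma part_ker_N:
  assumes "t \<noteq> 0" "classK p t \<in> J1 F p"
  shows "classF F p (normKF F t) = classF F p 1 \<longleftrightarrow> (\<exists>x\<in>F. x \<noteq> 0 \<and> classK p t = classK p x)"
proof
  assume "\<exists>x\<in>F. x \<noteq> 0 \<and> classK p t = classK p x"
  then obtain x y where x: "x \<in> F" "x \<noteq> 0" "y \<noteq> 0" "t = x * y ^ p"
    using classK_eq_iff assms(1) by blast
  have "normKF F t = 1 * (x * normKF F y) ^ p"
    using x norm_Fel by (simp add: norm_mult norm_power power_mult_distrib)
  moreover have "x * normKF F y \<in> F" "x * normKF F y \<noteq> 0" using x norm_F norm_nz F_mult by auto
  ultimately show "classF F p (normKF F t) = classF F p 1"
    unfolding classF_eq_iff[OF norm_F norm_nz[OF assms(1)] F1 one_neq_zero] by blast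
next
  assume "classF F p (normKF F t) = classF F p 1"
  then obtain f where f: "f \<in> F" "f \<noteq> 0" "normKF F t = 1 * f ^ p"
    unfolding classF_eq_iff[OF norm_F norm_nz[OF assms(1)] F1 one_neq_zero] by blast
  obtain g where g: "g \<noteq> 0" "sig xi t = t * g ^ p" using J1_iff assms by blast
  define d where "d = t * (\<Prod>j<p. gj g j)"
  have d: "d ^ p = normKF F t" "sig xi d = d * normKF F g" using delta[OF g(2)] d_def by simp_all
  have "d / f \<in> mu" using mu_of_pow[of d f] d(1) f by simp
  hence "d / f \<in> F" by (rule mu_F)
  hence "d \<in> F" using F_mult[OF _ f(1)] f(2) by (metis nonzero_divide_eq_eq)
  hence "sig xi d = d" using sig_F[OF xm] by blast
  moreover have "d \<noteq> 0" using d(1) norm_nz[OF assms(1)] p_pos by (auto simp: zero_power)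
  ultimately have "normKF F g = 1" using d(2) by simp
  then obtain b where b: "b \<noteq> 0" "sig xi b = g * b" using hilbert90 g(1) by blast
  define x where "x = t / b ^ p"
  have "sig xi x = x" unfolding x_def using g b
    by (simp add: sig_divide[OF xm] sig_power[OF xm] power_mult_distrib)
  hence xF: "x \<in> F" by (rule fixed_sig)
  have x0: "x \<noteq> 0" unfolding x_def using assms(1) b(1) by simp
  have "t = x * b ^ p" unfolding x_def using b(1) by simp
  hence "classK p t = classK p x" using classK_eq_iff[OF assms(1) x0] b(1) by blast
  thus "\<exists>x\<in>F. x \<noteq> 0 \<and> classK p t = classK p x" using xF x0 by blast
qed

lemma part_surj:
  "(\<forall>c\<in>gen_a F p a. \<exists>t. t \<noteq> 0 \<and> classK p t \<in> J1 F p \<and> classF F p (normKF F t) = c)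
   \<longleftrightarrow> (\<exists>t. t \<noteq> 0 \<and> normKF F t = xi)"
proof
  assume H: "\<forall>c\<in>gen_a F p a. \<exists>t. t \<noteq> 0 \<and> classK p t \<in> J1 F p \<and> classF F p (normKF F t) = c"
  have "classF F p a \<in> gen_a F p a" unfolding gen_a_iff by (intro exI[of _ 1]) simp
  then obtain t where t: "t \<noteq> 0" "classK p t \<in> J1 F p" "classF F p (normKF F t) = classF F p a"
    using H by blast
  obtain z where z: "z \<in> F" "z \<noteq> 0" "normKF F t = a * z ^ p"
    using t(3) unfolding classF_eq_iff[OF norm_F norm_nz[OF t(1)] aF a_nz] by blast
  obtain g where g: "g \<noteq> 0" "sig xi t = t * g ^ p" using J1_iff t by blast
  define d where "d = t * (\<Prod>j<p. gj g j)"
  have d: "d ^ p = normKF F t" "sig xi d = d * normKF F g" using delta[OF g(2)] d_def by simp_all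
  have "d ^ p = (al * z) ^ p" using d(1) z(3) al_p by (simp add: power_mult_distrib)
  hence zm: "d / (al * z) \<in> mu" using mu_of_pow al_nz z(2) by simp
  define e where "e = d / (al * z)"
  have de: "d = e * al * z" unfolding e_def using al_nz z(2) by simp
  have "sig xi d = e * (xi * al) * z"
    unfolding de using mu_F[OF zm[folded e_def]] z(1) sig_F[OF xm] sig_al[OF xm]
    by (simp add: sig_mult[OF xm])
  hence "sig xi d = xi * d" unfolding de by (simp add: ac_simps)
  moreover have "d \<noteq> 0" using d(1) norm_nz[OF t(1)] p_pos by (auto simp: zero_power)
  ultimately have "normKF F g = xi" using d(2) by (simp add: mult.commute)
  thus "\<exists>t. t \<noteq> 0 \<and> normKF F t = xi" using g(1) by blast
next
  assume "\<exists>t. t \<noteq> 0 \<and> normKF F t = xi"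
  then obtain n where n: "n \<noteq> 0" "normKF F n = xi" by blast
  show "\<forall>c\<in>gen_a F p a. \<exists>t. t \<noteq> 0 \<and> classK p t \<in> J1 F p \<and> classF F p (normKF F t) = c"
  proof
    fix c assume "c \<in> gen_a F p a"
    then obtain k where k: "c = classF F p (a ^ k)" unfolding gen_a_iff by blast
    define g where "g = n ^ k"
    have g0: "g \<noteq> 0" unfolding g_def using n(1) by simp
    have ng: "normKF F g = xi ^ k" unfolding g_def using n(2) by (simp add: norm_power)
    have "normKF F (g ^ p) = 1" using ng xi_mu[of k] by (simp add: norm_power mu_def)
    moreover have "g ^ p \<noteq> 0" using g0 by simp
    ultimately obtain t where t: "t \<noteq> 0" "sig xi t = g ^ p * t" using hilbert90 by blast
    have tg: "sig xi t = t * g ^ p" using t(2) by (simp add: mult.commute)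
    hence tJ: "classK p t \<in> J1 F p" using J1_iff[OF t(1)] g0 by blast
    define d where "d = t * (\<Prod>j<p. gj g j)"
    have d: "d ^ p = normKF F t" "sig xi d = d * normKF F g" using delta[OF tg] d_def by simp_all
    define h where "h = d / al ^ k"
    have "sig xi h = h" unfolding h_def using d(2) ng sig_al[OF xm] al_nz xi_nz
      by (simp add: sig_divide[OF xm] sig_power[OF xm] power_mult_distrib)
    hence hF: "h \<in> F" by (rule fixed_sig)
    have "d \<noteq> 0" using d(1) norm_nz[OF t(1)] p_pos by (auto simp: zero_power)
    hence h0: "h \<noteq> 0" unfolding h_def using al_nz by simp
    have "d = h * al ^ k" unfolding h_def using al_nz by simp
    hence "normKF F t = h ^ p * (al ^ k) ^ p" using d(1) by (simp add: power_mult_distrib)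
    also have "(al ^ k) ^ p = a ^ k" using al_p by (simp add: power_mult[symmetric] mult.commute[of k p]) (simp add: power_mult)
    finally have "normKF F t = a ^ k * h ^ p" by simp
    hence "classF F p (normKF F t) = c"
      unfolding k classF_eq_iff[OF norm_F norm_nz[OF t(1)] aF_pow] using hF h0 by blast
    thus "\<exists>t. t \<noteq> 0 \<and> classK p t \<in> J1 F p \<and> classF F p (normKF F t) = c" using t(1) tJ by blast
  qed
qed

end

theorem mainTheorem10:
  fixes F :: "'k::field set" and p :: nat and \<xi> a \<alpha> :: 'k
  assumes "prime p"
    and "is_subfield F"
    and "of_nat p \<noteq> (0::'k)"
    and "\<xi> \<in> F" and "primitive_root p \<xi>"
    and "a \<in> F" and "a \<noteq> 0" and "\<not> (\<exists>y\<in>F. a = y ^ p)"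
    and "\<alpha> ^ p = a" and "generated_by F \<alpha>"
  shows
    \<comment> \<open>i: inclusion of the subgroup generated by [a]; injectivity of i is trivial\<close>
    "gen_a F p a \<subseteq> FmodP F p
     \<comment> \<open>epsilon is well defined and lands in J_1\<close>
     \<and> (\<forall>x\<in>F. \<forall>y\<in>F. x \<noteq> 0 \<and> y \<noteq> 0 \<and> classF F p x = classF F p y
            \<longrightarrow> classK p x = classK p y)
     \<and> (\<forall>x\<in>F. x \<noteq> 0 \<longrightarrow> classK p x \<in> J1 F p)
     \<comment> \<open>N is well defined on J_1 with values in the subgroup generated by [a]\<close>
     \<and> (\<forall>\<theta>. \<theta> \<noteq> 0 \<and> classK p \<theta> \<in> J1 F p \<longrightarrow>
            normKF F \<theta> \<in> F \<and> normKF F \<theta> \<noteq> 0 \<and> classF F p (normKF F \<theta>) \<in> gen_a F p a)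
     \<and> (\<forall>\<theta> \<eta>. \<theta> \<noteq> 0 \<and> \<eta> \<noteq> 0 \<and> classK p \<theta> \<in> J1 F p \<and> classK p \<theta> = classK p \<eta>
            \<longrightarrow> classF F p (normKF F \<theta>) = classF F p (normKF F \<eta>))
     \<comment> \<open>exactness at F^x/F^{x p}: ker epsilon = image of i\<close>
     \<and> (\<forall>x\<in>F. x \<noteq> 0 \<longrightarrow> (classK p x = classK p 1 \<longleftrightarrow> classF F p x \<in> gen_a F p a))
     \<comment> \<open>exactness at J_1: ker N = image of epsilon\<close>
     \<and> (\<forall>\<theta>. \<theta> \<noteq> 0 \<and> classK p \<theta> \<in> J1 F p \<longrightarrow>
            (classF F p (normKF F \<theta>) = classF F p 1 \<longleftrightarrow>
             (\<exists>x\<in>F. x \<noteq> 0 \<and> classK p \<theta> = classK p x)))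
     \<comment> \<open>surjectivity of N iff xi is a norm\<close>
     \<and> ((\<forall>c\<in>gen_a F p a. \<exists>\<theta>. \<theta> \<noteq> 0 \<and> classK p \<theta> \<in> J1 F p \<and> classF F p (normKF F \<theta>) = c)
        \<longleftrightarrow> (\<exists>\<theta>. \<theta> \<noteq> 0 \<and> normKF F \<theta> = \<xi>))"
  proof -
  interpret kummer F p "\<xi>" a "\<alpha>" using assms by unfold_locales
  have P1: "gen_a F p a \<subseteq> FmodP F p"
  proof
    fix c assume "c \<in> gen_a F p a"
    then obtain k where "c = classF F p (a ^ k)" unfolding gen_a_iff by blast
    thus "c \<in> FmodP F p" unfolding FmodP_def using aF_pow[of k] by blast
  qed
  have P2: "\<forall>x\<in>F. \<forall>y\<in>F. x \<noteq> 0 \<and> y \<noteq> 0 \<and> classF F p x = classF F p y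
            \<longrightarrow> classK p x = classK p y"
  proof (intro ballI impI)
    fix x y assume x: "x \<in> F" and y: "y \<in> F" and xy: "x \<noteq> 0 \<and> y \<noteq> 0 \<and> classF F p x = classF F p y"
    have x0: "x \<noteq> 0" and y0: "y \<noteq> 0" and e: "classF F p x = classF F p y" using xy by auto
    obtain z where z: "z \<in> F" "z \<noteq> 0" "x = y * z ^ p"
      using iffD1[OF classF_eq_iff[OF x x0 y y0] e] by blast
    have "\<exists>z. z \<noteq> 0 \<and> x = y * z ^ p" using z(2,3) by blast
    thus "classK p x = classK p y" using iffD2[OF classK_eq_iff[OF x0 y0]] by blast
  qed
  have P3: "\<forall>x\<in>F. x \<noteq> 0 \<longrightarrow> classK p x \<in> J1 F p"
  proof (intro ballI impI)
    fix x assume x: "x \<in> F" "x \<noteq> 0"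
    have "sig \<xi> x = x * 1 ^ p" using sig_F[OF xm x(1)] by simp
    hence "\<exists>g. g \<noteq> 0 \<and> sig \<xi> x = x * g ^ p" by (intro exI[of _ 1]) simp
    thus "classK p x \<in> J1 F p" using iffD2[OF J1_iff[OF x(2)]] by blast
  qed
  have P4: "\<forall>\<theta>. \<theta> \<noteq> 0 \<and> classK p \<theta> \<in> J1 F p \<longrightarrow>
            normKF F \<theta> \<in> F \<and> normKF F \<theta> \<noteq> 0 \<and> classF F p (normKF F \<theta>) \<in> gen_a F p a"
  proof (intro allI impI conjI)
    fix t assume t: "t \<noteq> 0 \<and> classK p t \<in> J1 F p"
    show "normKF F t \<in> F" by (rule norm_F)
    show "normKF F t \<noteq> 0" using t by (simp add: norm_nz)
    show "classF F p (normKF F t) \<in> gen_a F p a" using t norm_class_gen by blast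
  qed
  have P5: "\<forall>\<theta> \<eta>. \<theta> \<noteq> 0 \<and> \<eta> \<noteq> 0 \<and> classK p \<theta> \<in> J1 F p \<and> classK p \<theta> = classK p \<eta>
            \<longrightarrow> classF F p (normKF F \<theta>) = classF F p (normKF F \<eta>)"
  proof (intro allI impI)
    fix t u assume tu: "t \<noteq> 0 \<and> u \<noteq> 0 \<and> classK p t \<in> J1 F p \<and> classK p t = classK p u"
    have t0: "t \<noteq> 0" and u0: "u \<noteq> 0" and e: "classK p t = classK p u" using tu by auto
    obtain y where y: "y \<noteq> 0" "t = u * y ^ p" using iffD1[OF classK_eq_iff[OF t0 u0] e] by blast
    hence "normKF F t = normKF F u * normKF F y ^ p" by (simp add: norm_mult norm_power)
    hence "\<exists>z\<in>F. z \<noteq> 0 \<and> normKF F t = normKF F u * z ^ p" using norm_F[of y] norm_nz[OF y(1)] by blast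
    thus "classF F p (normKF F t) = classF F p (normKF F u)"
      using iffD2[OF classF_eq_iff[OF norm_F norm_nz[OF t0] norm_F norm_nz[OF u0]]] by blast
  qed
  have P6: "\<forall>x\<in>F. x \<noteq> 0 \<longrightarrow> (classK p x = classK p 1 \<longleftrightarrow> classF F p x \<in> gen_a F p a)"
    using part_ker_eps by blast
  have P7: "\<forall>\<theta>. \<theta> \<noteq> 0 \<and> classK p \<theta> \<in> J1 F p \<longrightarrow>
            (classF F p (normKF F \<theta>) = classF F p 1 \<longleftrightarrow>
             (\<exists>x\<in>F. x \<noteq> 0 \<and> classK p \<theta> = classK p x))"
  proof (intro allI impI)
    fix t assume "t \<noteq> 0 \<and> classK p t \<in> J1 F p"
    thus "(classF F p (normKF F t) = classF F p 1 \<longleftrightarrow> (\<exists>x\<in>F. x \<noteq> 0 \<and> classK p t = classK p x))"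
      using part_ker_N[of t] by blast
  qed
  note P8 = part_surj
  show ?thesis by (intro conjI P1 P2 P3 P4 P5 P6 P7 P8)
qed

end
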